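(* Let $m\ge2$ be an integer and $z$ a complex number with $0<|z|<1$. Then $$\sum_{k=1}^\infty\frac{\binom{2k}{m}z^{2k}}{(2k-1)(2k)(2k+1)}=\frac{1}{4z}\sum_{j=0}^{m-1}\frac{1}{m-j}\left((-1)^{m-1}\Big(\frac{z}{1+z}\Big)^{m-j}+(-1)^j\Big(\frac{z}{1-z}\Big)^{m-j}\right)$$ $$+\frac{1}{2m}\left((-1)^{m-1}\Big(1+\frac z2\Big)\Big(\frac{z}{1+z}\Big)^m-\Big(1-\frac z2\Big)\Big(\frac{z}{1-z}\Big)^m\right)$$ $$+\frac{1}{4(m-1)}\left((-1)^m(1+z)\Big(\frac{z}{1+z}\Big)^m+(1-z)\Big(\frac{z}{1-z}\Big)^m\right)+\frac{(-1)^m}{4z}\ln\Big(\frac{1+z}{1-z}\Big).$$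
   Context: $\ln$ denotes the principal branch of the logarithm. *)

theory Defs
  imports "HOL-Analysis.Analysis"
begin

end

theory Submission
  imports Defs
begin

lemma choose_sums_step:
  fixes z :: "'a::{real_normed_field,banach}"
  assumes z: "norm z < 1" and s: "(\<lambda>N. of_nat (N choose j) * z^N) sums s"
    and sn: "summable (\<lambda>N. norm (of_nat (N choose j) * z^N))"
  shows "(\<lambda>N. of_nat (N choose Suc j) * z^N) sums (z * s / (1 - z))"
proof -
  have g: "summable (\<lambda>k. norm (z^k))"
    using z by (simp add: norm_power summable_geometric)
  have "(\<lambda>k. \<Sum>i\<le>k. (of_nat (i choose j) * z^i) * z^(k-i)) sums
        ((\<Sum>k. of_nat (k choose j) * z^k) * (\<Sum>k. z^k))"
    by (rule Cauchy_product_sums[OF sn g])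
  moreover have "(\<Sum>k. of_nat (k choose j) * z^k) = s" using s sums_unique by metis
  moreover have "(\<Sum>k. z^k) = 1 / (1 - z)" using geometric_sums[OF z] sums_unique by metis
  moreover have "(\<Sum>i\<le>k. (of_nat (i choose j) * z^i) * z^(k-i)) = of_nat (Suc k choose Suc j) * z^k" for k
  proof -
    have "(\<Sum>i\<le>k. (of_nat (i choose j) * z^i) * z^(k-i)) = (\<Sum>i\<le>k. of_nat (i choose j) * z^k)"
      by (intro sum.cong refl) (simp add: mult.assoc flip: power_add)
    also have "\<dots> = of_nat (\<Sum>i\<le>k. i choose j) * z^k"
      by (simp add: sum_distrib_right)
    finally show ?thesis by (simp add: sum_choose_upper)
  qed
  ultimately have "(\<lambda>k. of_nat (Suc k choose Suc j) * z^k) sums (s / (1 - z))" by simp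
  then have "(\<lambda>k. z * (of_nat (Suc k choose Suc j) * z^k)) sums (z * (s / (1 - z)))"
    by (rule sums_mult)
  then have "(\<lambda>k. of_nat (Suc k choose Suc j) * z^(Suc k)) sums (z * s / (1 - z))"
    by (simp add: mult_ac)
  then show ?thesis by (subst (asm) sums_Suc_iff) simp
qed

lemma choose_sums_real:
  fixes x :: real
  assumes "0 \<le> x" "x < 1"
  shows "(\<lambda>N. of_nat (N choose j) * x^N) sums (x^j / (1-x)^(Suc j))"
proof (induction j)
  case 0
  then show ?case using geometric_sums[of x] assms by simp
next
  case (Suc j)
  have "summable (\<lambda>N. norm (of_nat (N choose j) * x^N))"
    using sums_summable[OF Suc.IH] assms by (simp add: abs_mult)
  from choose_sums_step[OF _ Suc.IH this] assms show ?case
    by (simp add: field_simps)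
qed

lemma choose_sums:
  fixes z :: complex
  assumes "norm z < 1"
  shows "(\<lambda>N. of_nat (N choose j) * z^N) sums (z^j / (1-z)^(Suc j))"
proof (induction j)
  case 0
  then show ?case using geometric_sums[of z] assms by simp
next
  case (Suc j)
  have "summable (\<lambda>N. norm (of_nat (N choose j) * z^N))"
    using sums_summable[OF choose_sums_real[of "norm z" j]] assms by (simp add: norm_mult norm_power)
  from choose_sums_step[OF assms Suc.IH this] assms show ?case
    by (simp add: field_simps)
qed

lemma choose_div_sums:
  fixes z :: complex
  assumes z: "norm z < 1" and j: "j \<ge> 1"
  shows "(\<lambda>N. of_nat (N choose j) * z^N / of_nat N) sums ((z/(1-z))^j / of_nat j)"
proof -
  obtain i where i: "j = Suc i" using j by (cases j) auto
  have "(\<lambda>N. (z / of_nat (Suc i)) * (of_nat (N choose i) * z^N)) sums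
        ((z / of_nat (Suc i)) * (z^i / (1-z)^(Suc i)))"
    by (rule sums_mult[OF choose_sums[OF z]])
  moreover have "(z / of_nat (Suc i)) * (of_nat (N choose i) * z^N) =
     of_nat (Suc N choose Suc i) * z^(Suc N) / of_nat (Suc N)" for N
  proof -
    have "of_nat (Suc i) * of_nat (Suc N choose Suc i) = (of_nat (Suc N) * of_nat (N choose i) :: complex)"
      by (metis Suc_times_binomial of_nat_mult)
    then show ?thesis by (simp add: field_simps del: of_nat_Suc binomial_Suc_Suc)
  qed
  moreover have "(z / of_nat (Suc i)) * (z^i / (1-z)^(Suc i)) = (z/(1-z))^(Suc i) / of_nat (Suc i)"
    by (simp add: field_simps power_divide del: of_nat_Suc)
  ultimately have "(\<lambda>N. of_nat (Suc N choose Suc i) * z^(Suc N) / of_nat (Suc N)) sums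
       ((z/(1-z))^(Suc i) / of_nat (Suc i))" by simp
  then show ?thesis unfolding i by (subst (asm) sums_Suc_iff) simp
qed

lemma choose0_div_sums:
  fixes z :: complex
  assumes z: "norm z < 1"
  shows "(\<lambda>N. of_nat (N choose 0) * z^N / of_nat N) sums (- Ln (1 - z))"
proof -
  have "(\<lambda>n. (-1)^Suc n / of_nat n * (-z)^n) sums ln (1 + (-z))"
    by (rule Ln_series) (use z in simp)
  then have "(\<lambda>n. - ((-1)^Suc n / of_nat n * (-z)^n)) sums (- Ln (1 - z))"
    by (intro sums_minus) simp
  moreover have eq: "- ((-1)^Suc n / of_nat n * (-z)^n) = of_nat (n choose 0) * z^n / of_nat n" for n
  proof -
    have e: "(-1::complex)^n * (-1)^n = 1"
      by (metis power_minus_mult minus_one_mult_self)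
    have "(-z)^n = (-1)^n * z^n" by (rule power_minus)
    then have "(-1)^Suc n / of_nat n * (-z)^n = - (((-1)^n * (-1)^n) * z^n / of_nat n)"
      by (simp add: field_simps)
    then show ?thesis using e by simp
  qed
  ultimately show ?thesis by (simp only: eq)
qed

lemma alt_choose:
  "(of_nat (N choose m) :: complex) = (\<Sum>i\<le>m. (-1)^i * of_nat (Suc N choose (m - i)))"
proof (induction m)
  case 0
  then show ?case by simp
next
  case (Suc m)
  have "(\<Sum>i\<le>Suc m. (-1)^i * of_nat (Suc N choose (Suc m - i)) :: complex)
     = of_nat (Suc N choose Suc m) + (\<Sum>i\<le>m. (-1)^(Suc i) * of_nat (Suc N choose (m - i)))"
    by (subst sum.atMost_Suc_shift) simp
  also have "\<dots> = of_nat (Suc N choose Suc m) - of_nat (N choose m)"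
    using Suc.IH by (simp add: sum_negf)
  also have "\<dots> = of_nat (N choose Suc m)" by simp
  finally show ?case by simp
qed

lemma d_sums:
  fixes z :: complex
  assumes z: "norm z < 1"
  shows "(\<lambda>N. of_nat ((N - 1) choose m) * z^N / of_nat N) sums
     ((\<Sum>i<m. (-1)^i * ((z/(1-z))^(m-i) / of_nat (m-i))) + (-1)^m * (- Ln (1 - z)))"
proof -
  define x where "x i = (if i < m then (z/(1-z))^(m-i) / of_nat (m-i) else - Ln (1 - z))" for i
  have "(\<lambda>N. \<Sum>i\<le>m. (-1)^i * (of_nat (N choose (m-i)) * z^N / of_nat N)) sums (\<Sum>i\<le>m. (-1)^i * x i)"
  proof (rule sums_sum, rule sums_mult)
    fix i assume "i \<in> {..m}"
    show "(\<lambda>N. of_nat (N choose (m-i)) * z^N / of_nat N) sums x i"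
    proof (cases "i < m")
      case True
      then show ?thesis using choose_div_sums[OF z, of "m-i"] by (simp add: x_def)
    next
      case False
      with \<open>i \<in> {..m}\<close> have "i = m" by simp
      then show ?thesis using choose0_div_sums[OF z] by (simp add: x_def)
    qed
  qed
  moreover have "(\<Sum>i\<le>m. (-1)^i * (of_nat (N choose (m-i)) * z^N / of_nat N)) =
      of_nat ((N - 1) choose m) * z^N / of_nat N" for N
  proof (cases N)
    case 0 then show ?thesis by simp
  next
    case (Suc N')
    have "(\<Sum>i\<le>m. (-1)^i * (of_nat (N choose (m-i)) * z^N / of_nat N)) =
        (\<Sum>i\<le>m. ((-1)^i * of_nat (N choose (m-i))) * (z^N / of_nat N))"
      by (intro sum.cong refl) (simp only: mult.assoc times_divide_eq_right)
    also have "\<dots> = (\<Sum>i\<le>m. (-1)^i * of_nat (N choose (m-i))) * (z^N / of_nat N)"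
      by (simp only: sum_distrib_right)
    also have "(\<Sum>i\<le>m. (-1)^i * of_nat (N choose (m-i))) = (of_nat ((N - 1) choose m) :: complex)"
      unfolding Suc using alt_choose[of N' m] by simp
    finally show ?thesis by simp
  qed
  moreover have "(\<Sum>i\<le>m. (-1)^i * x i) = (\<Sum>i<m. (-1)^i * ((z/(1-z))^(m-i) / of_nat (m-i))) + (-1)^m * (- Ln (1 - z))"
  proof -
    have "(\<Sum>i\<le>m. (-1)^i * x i) = (\<Sum>i<m. (-1)^i * x i) + (-1)^m * x m"
      by (simp only: lessThan_Suc_atMost[symmetric] sum.lessThan_Suc)
    moreover have "(\<Sum>i<m. (-1)^i * x i) = (\<Sum>i<m. (-1)^i * ((z/(1-z))^(m-i) / of_nat (m-i)))"
      by (intro sum.cong refl) (simp add: x_def)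
    ultimately show ?thesis by (simp add: x_def)
  qed
  ultimately show ?thesis by simp
qed

lemma pf: fixes n x :: complex assumes a: "n - 1 \<noteq> 0" "n \<noteq> 0" "n + 1 \<noteq> 0"
  shows "x / (n - 1) / 2 - x / n + x / (n + 1) / 2 = x / ((n - 1) * n * (n + 1))"
proof -
  have h: "2 + n * 2 \<noteq> 0"
  proof
    assume "2 + n * 2 = 0"
    then have "2 * (n + 1) = 0" by (simp add: algebra_simps)
    then show False using a(3) by (metis mult_eq_0_iff zero_neq_numeral)
  qed
  have "x / (n - 1) / 2 - x / n + x / (n + 1) / 2 = x * (n * (n+1) - 2 * ((n-1) * (n+1)) + (n-1) * n) / (2 * ((n - 1) * n * (n + 1)))"
    using a h by (simp add: divide_simps) (simp add: algebra_simps)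
  also have "n * (n+1) - 2 * ((n-1) * (n+1)) + (n-1) * n = 2"
    by (simp add: algebra_simps)
  finally show ?thesis by simp
qed

lemma alg:
  fixes z u w U W S1 S2 L1 L2 sg P :: complex
  assumes "z \<noteq> 0" "P \<noteq> 0" "P + 1 \<noteq> 0"
  shows "(z*(W/P + w*W/(P+1))/2 - w*W/(P+1) + ((S1 - sg*L1)/z)/2
   + ((-z)*((-sg*U)/P + sg*u*U/(P+1))/2 - sg*u*U/(P+1) + ((sg*S2 - sg*L2)/(-z))/2))/2
 = 1/(4*z)*(-sg*S2 + S1) + 1/(2*(P+1))*((-sg)*(1+z/2)*(u*U) - (1-z/2)*(w*W))
   + 1/(4*P)*(sg*(z*U) + z*W) + sg/(4*z)*(L2 - L1)"
proof -
  define a where "a = 1/P"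
  define b where "b = 1/(P+1)"
  define c where "c = 1/z"
  have iff: "?thesis \<longleftrightarrow> (z*(W*a + w*W*b)/2 - w*W*b + ((S1 - sg*L1)*c)/2
   + ((-z)*((-sg*U)*a + sg*u*U*b)/2 - sg*u*U*b - ((sg*S2 - sg*L2)*c)/2))/2
 = c/4*(-sg*S2 + S1) + b/2*((-sg)*(1+z/2)*(u*U) - (1-z/2)*(w*W))
   + a/4*(sg*(z*U) + z*W) + sg*c/4*(L2 - L1)"
    unfolding a_def b_def c_def by (simp add: field_simps)
  show ?thesis unfolding iff by (simp add: field_simps)
qed
lemma Ln_quot:
  fixes z :: complex
  assumes "norm z < 1"
  shows "Ln ((1 + z) / (1 - z)) = Ln (1 + z) - Ln (1 - z)"
proof -
  have r: "\<bar>Re z\<bar> < 1" using abs_Re_le_cmod[of z] assms by linarith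
  have p1: "0 < Re (1 + z)" "0 < Re (1 - z)" using r by auto
  have "Re (1 + z) \<noteq> Re 0" "Re (1 - z) \<noteq> Re 0" using p1 by simp_all
  then have n1: "1 + z \<noteq> 0" "1 - z \<noteq> 0" by metis+
  have i1: "\<bar>Im (Ln (1 + z))\<bar> < pi/2" "\<bar>Im (Ln (1 - z))\<bar> < pi/2"
    using Re_Ln_pos_lt_imp p1 by auto
  have nr: "1 - z \<notin> \<real>\<^sub>\<le>\<^sub>0" using p1(2) by (auto simp: complex_nonpos_Reals_iff)
  have li: "Ln (inverse (1 - z)) = - Ln (1 - z)" by (rule Ln_inverse[OF nr])
  have "Ln ((1 + z) * inverse (1 - z)) = Ln (1 + z) + Ln (inverse (1 - z))"
    by (rule Ln_times_simple) (use n1 i1 li in auto)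
  then show ?thesis using li by (simp add: divide_inverse)
qed

definition Dv :: "nat \<Rightarrow> complex \<Rightarrow> complex" where
  "Dv m z = (\<Sum>i<m. (-1)^i * ((z/(1-z))^(m-i) / of_nat (m-i))) + (-1)^m * (- Ln (1 - z))"

lemma c_sums:
  fixes z :: complex
  assumes z: "norm z < 1" "z \<noteq> 0"
  shows "(\<lambda>N. of_nat (N choose m) * z^N / of_nat (N+1)) sums (Dv m z / z)"
proof -
  have "(\<lambda>N. of_nat ((Suc N - 1) choose m) * z^(Suc N) / of_nat (Suc N)) sums Dv m z"
    using d_sums[OF z(1), of m] unfolding Dv_def by (subst sums_Suc_iff) simp
  then have "(\<lambda>N. (1/z) * (of_nat ((Suc N - 1) choose m) * z^(Suc N) / of_nat (Suc N))) sums ((1/z) * Dv m z)"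
    by (rule sums_mult)
  moreover have eq: "(1/z) * (of_nat ((Suc N - 1) choose m) * z^(Suc N) / of_nat (Suc N)) =
     of_nat (N choose m) * z^N / of_nat (N+1)" for N
    using z(2) by (simp add: field_simps)
  ultimately have "(\<lambda>N. of_nat (N choose m) * z^N / of_nat (N+1)) sums ((1/z) * Dv m z)"
    by (simp only: eq)
  then show ?thesis by simp
qed

lemma b_sums:
  fixes z :: complex
  assumes z: "norm z < 1" and m: "m \<ge> 2"
  shows "(\<lambda>N. of_nat (N choose m) * z^N / of_nat (N - 1)) sums
     (z * ((z/(1-z))^(m-1) / of_nat (m-1) + (z/(1-z))^m / of_nat m))"
proof -
  obtain m' where m': "m = Suc m'" "m' \<ge> 1" using m by (cases m) auto
  have "(\<lambda>M. z * (of_nat (M choose m') * z^M / of_nat M + of_nat (M choose m) * z^M / of_nat M)) sums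
     (z * ((z/(1-z))^m' / of_nat m' + (z/(1-z))^m / of_nat m))"
    by (intro sums_mult sums_add choose_div_sums z) (use m' in auto)
  moreover have "z * (of_nat (M choose m') * z^M / of_nat M + of_nat (M choose m) * z^M / of_nat M)
     = of_nat (Suc M choose m) * z^(Suc M) / of_nat (Suc M - 1)" for M
  proof -
    have "z * (of_nat (M choose m') * z^M / of_nat M + of_nat (M choose m) * z^M / of_nat M) =
      z * ((of_nat (M choose m') + of_nat (M choose m)) * z^M / of_nat M)"
      by (simp add: add_divide_distrib distrib_right)
    also have "\<dots> = (of_nat (M choose m') + of_nat (M choose m)) * z^(Suc M) / of_nat M"
      by (simp add: mult_ac)
    finally show ?thesis unfolding m'(1) by simp
  qed
  ultimately have "(\<lambda>M. of_nat (Suc M choose m) * z^(Suc M) / of_nat (Suc M - 1)) sums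
     (z * ((z/(1-z))^m' / of_nat m' + (z/(1-z))^m / of_nat m))" by simp
  then show ?thesis using m' by (subst (asm) sums_Suc_iff) simp
qed

lemma f_sums:
  fixes z :: complex
  assumes z: "norm z < 1" "z \<noteq> 0" and m: "m \<ge> 2"
  shows "(\<lambda>N. of_nat (N choose m) * z^N / (of_nat (N - 1) * of_nat N * of_nat (N + 1))) sums
     ((z * ((z/(1-z))^(m-1) / of_nat (m-1) + (z/(1-z))^m / of_nat m)) / 2
      - (z/(1-z))^m / of_nat m + (Dv m z / z) / 2)"
proof -
  have "(\<lambda>N. (of_nat (N choose m) * z^N / of_nat (N - 1)) / 2 - of_nat (N choose m) * z^N / of_nat N
       + (of_nat (N choose m) * z^N / of_nat (N+1)) / 2) sums
     ((z * ((z/(1-z))^(m-1) / of_nat (m-1) + (z/(1-z))^m / of_nat m)) / 2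
      - (z/(1-z))^m / of_nat m + (Dv m z / z) / 2)"
    by (intro sums_add sums_diff sums_divide b_sums c_sums choose_div_sums z m) (use m in auto)
  moreover have "(of_nat (N choose m) * z^N / of_nat (N - 1)) / 2 - of_nat (N choose m) * z^N / of_nat N
       + (of_nat (N choose m) * z^N / of_nat (N+1)) / 2 =
       of_nat (N choose m) * z^N / (of_nat (N - 1) * of_nat N * of_nat (N + 1))" for N
  proof (cases "N < m")
    case True
    then show ?thesis by (simp add: binomial_eq_0)
  next
    case False
    then have N: "N \<ge> 2" using m by simp
    then have e: "(of_nat (N - 1) :: complex) = of_nat N - 1" by (simp add: of_nat_diff)
    have n1: "(of_nat N :: complex) - 1 \<noteq> 0" "(of_nat N :: complex) \<noteq> 0" "(of_nat N :: complex) + 1 \<noteq> 0"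
    proof -
      have "(of_nat (N-1)::complex) \<noteq> 0" using N by simp
      then show "(of_nat N :: complex) - 1 \<noteq> 0" using e by simp
      show "(of_nat N :: complex) \<noteq> 0" using N by simp
      have "(of_nat N :: complex) + 1 = of_nat (Suc N)" by simp
      then show "(of_nat N :: complex) + 1 \<noteq> 0" by (metis of_nat_eq_0_iff Zero_not_Suc)
    qed
    show ?thesis unfolding e of_nat_add of_nat_1 by (rule pf[OF n1])
  qed
  ultimately show ?thesis by simp
qed

lemma even_sums:
  fixes g :: "nat \<Rightarrow> complex"
  assumes "g sums s" "\<And>k. g (2*k+1) = 0"
  shows "(\<lambda>k. g (2*k)) sums s"
proof -
  have eq: "(\<Sum>i<2*K. g i) = (\<Sum>k<K. g (2*k))" for K
  proof (induction K)
    case 0 then show ?case by simp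
  next
    case (Suc K)
    have "(\<Sum>i<2*Suc K. g i) = (\<Sum>i<2*K. g i) + g (2*K) + g (2*K+1)"
      by (simp add: algebra_simps)
    then show ?case using Suc.IH assms(2) by simp
  qed
  have "(\<lambda>n. \<Sum>i<n. g i) \<longlonglongrightarrow> s" using assms(1) by (simp add: sums_def)
  then have "((\<lambda>n. \<Sum>i<n. g i) \<circ> (\<lambda>K. 2*K)) \<longlonglongrightarrow> s"
    by (rule LIMSEQ_subseq_LIMSEQ) (simp add: strict_mono_def)
  then show ?thesis unfolding sums_def o_def eq .
qed

theorem lemma5:
  fixes m :: nat and z :: complex
  assumes "m \<ge> 2" and "0 < norm z" and "norm z < 1"
  shows "(\<lambda>k. let n = Suc k in
            of_nat ((2*n) choose m) * z ^ (2*n)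
            / (of_nat (2*n - 1) * of_nat (2*n) * of_nat (2*n + 1)))
         sums
         (1 / (4*z) * (\<Sum>j<m. 1 / of_nat (m - j) *
              ((-1) ^ (m - 1) * (z / (1 + z)) ^ (m - j) + (-1) ^ j * (z / (1 - z)) ^ (m - j)))
          + 1 / (2 * of_nat m) *
              ((-1) ^ (m - 1) * (1 + z / 2) * (z / (1 + z)) ^ m - (1 - z / 2) * (z / (1 - z)) ^ m)
          + 1 / (4 * of_nat (m - 1)) *
              ((-1) ^ m * (1 + z) * (z / (1 + z)) ^ m + (1 - z) * (z / (1 - z)) ^ m)
          + (-1) ^ m / (4*z) * Ln ((1 + z) / (1 - z)))"
    (is "?L sums ?R")
proof -
  have z0: "z \<noteq> 0" using assms(2) by auto
  have nz: "norm (-z) < 1" "-z \<noteq> 0" using assms z0 by auto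
  define f where "f = (\<lambda>(x::complex) N. of_nat (N choose m) * x^N / (of_nat (N - 1) * of_nat N * of_nat (N + 1)))"
  define T where "T x = (x * ((x/(1-x))^(m-1) / of_nat (m-1) + (x/(1-x))^m / of_nat m)) / 2
      - (x/(1-x))^m / of_nat m + (Dv m x / x) / 2" for x
  have s1: "f z sums T z" unfolding f_def T_def by (rule f_sums[OF assms(3) z0 assms(1)])
  have s2: "f (-z) sums T (-z)" unfolding f_def T_def by (rule f_sums[OF nz assms(1)])
  have "(\<lambda>N. (f z N + f (-z) N) / 2) sums ((T z + T (-z)) / 2)"
    by (intro sums_divide sums_add s1 s2)
  moreover have fm: "f (-z) N = (-1)^N * f z N" for N
    unfolding f_def by (simp add: power_minus[of z])
  ultimately have "(\<lambda>k. (f z (2*k) + f (-z) (2*k)) / 2) sums ((T z + T (-z)) / 2)"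
    by (intro even_sums) (simp_all add: fm)
  then have "(\<lambda>k. f z (2*k)) sums ((T z + T (-z)) / 2)"
    by (simp add: fm)
  then have "(\<lambda>k. f z (2 * Suc k)) sums ((T z + T (-z)) / 2)"
    by (subst sums_Suc_iff) (simp add: f_def)
  moreover have "?L = (\<lambda>k. f z (2 * Suc k))" by (simp add: f_def Let_def)
  moreover have "(T z + T (-z)) / 2 = ?R"
  proof -
    obtain p where p: "m = Suc p" "p \<ge> 1" using assms(1) by (cases m) auto
    define u where "u = z/(1+z)"
    define w where "w = z/(1-z)"
    define sg where "sg = (-1::complex)^m"
    define U where "U = u^p"
    define W where "W = w^p"
    define S1 where "S1 = (\<Sum>i<m. (-1)^i * (w^(m-i) / of_nat (m-i)))"
    define S2 where "S2 = (\<Sum>i<m. u^(m-i) / of_nat (m-i))"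
    define L1 where "L1 = Ln (1 - z)"
    define L2 where "L2 = Ln (1 + z)"
    define P where "P = (of_nat p :: complex)"
    have r: "\<bar>Re z\<bar> < 1" using abs_Re_le_cmod[of z] assms by linarith
    have nz: "1 + z \<noteq> 0" "1 - z \<noteq> 0" using r by (auto simp: complex_eq_iff)
    have hu: "(1+z)*u = z" unfolding u_def using nz by simp
    have hw: "(1-z)*w = z" unfolding w_def using nz by simp
    have sgp: "(-1::complex)^p = -sg" unfolding sg_def p by simp
    have sgm1: "(-1::complex)^(m-1) = -sg" using sgp p by simp
    have Pm: "(of_nat m :: complex) = P + 1" "(of_nat (m-1) :: complex) = P" unfolding P_def p by simp_all
    have P1: "P + 1 = of_nat (Suc p)" by (simp add: P_def)
    have P0: "P \<noteq> 0" "P + 1 \<noteq> 0"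
      using p(2) unfolding P1 by (simp_all add: P_def del: of_nat_Suc)
    have um: "u^m = u*U" "w^m = w*W" "u^(m-1) = U" "w^(m-1) = W" unfolding U_def W_def p by simp_all
    have mu: "(-z)/(1-(-z)) = -u" unfolding u_def by simp
    have Dz: "Dv m z = S1 - sg*L1" unfolding Dv_def S1_def sg_def L1_def w_def by simp
    have Dmz: "Dv m (-z) = sg*S2 - sg*L2"
    proof -
      have "(\<Sum>i<m. (-1)^i * (((-z)/(1-(-z)))^(m-i) / of_nat (m-i))) = sg * S2"
        unfolding S2_def sum_distrib_left mu
      proof (intro sum.cong refl)
        fix i assume "i \<in> {..<m}"
        then have "(-1::complex)^i * (-1)^(m-i) = sg" unfolding sg_def by (simp flip: power_add)
        moreover have "(-u)^(m-i) = (-1)^(m-i) * u^(m-i)" by (rule power_minus)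
        ultimately show "(-1)^i * ((-u)^(m-i) / of_nat (m-i)) = sg * (u^(m-i) / of_nat (m-i))"
          by (metis (no_types, lifting) mult.assoc times_divide_eq_right)
      qed
      then show ?thesis unfolding Dv_def L2_def sg_def by simp
    qed
    have Tz: "T z = z*(W/P + w*W/(P+1))/2 - w*W/(P+1) + ((S1 - sg*L1)/z)/2"
      unfolding T_def Dz using um Pm by (simp add: w_def)
    have Tmz: "T (-z) = (-z)*((-sg*U)/P + sg*u*U/(P+1))/2 - sg*u*U/(P+1) + ((sg*S2 - sg*L2)/(-z))/2"
    proof -
      have a: "((-z)/(1-(-z)))^(m-1) = -sg*U" unfolding mu U_def p using sgp
        by (simp add: power_minus[of u])
      have b: "((-z)/(1-(-z)))^m = sg*u*U" unfolding mu U_def p using sgp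
        by (simp add: power_minus[of u])
      show ?thesis unfolding T_def Dmz a b Pm ..
    qed
    have sumR: "(\<Sum>j<m. 1 / of_nat (m - j) *
              (-sg * u ^ (m - j) + (-1) ^ j * w ^ (m - j))) = -sg*S2 + S1"
      unfolding S1_def S2_def sum_distrib_left
      by (simp add: sum.distrib[symmetric] sum_negf[symmetric] algebra_simps)
    have R: "?R = 1/(4*z)*(-sg*S2 + S1) + 1/(2*(P+1))*((-sg)*(1+z/2)*(u*U) - (1-z/2)*(w*W))
        + 1/(4*P)*(sg*(z*U) + z*W) + sg/(4*z)*(L2 - L1)"
    proof -
      have e3: "(-1) ^ m * (1 + z) * (z / (1 + z)) ^ m = sg*(z*U)"
        unfolding sg_def u_def[symmetric] um(1) using hu by (simp add: mult_ac)
      have e4: "(1 - z) * (z / (1 - z)) ^ m = z*W"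
        unfolding w_def[symmetric] um(2) using hw by (simp add: mult_ac)
      show ?thesis
        unfolding e3 e4 Ln_quot[OF assms(3)] sgm1 Pm
        unfolding u_def[symmetric] w_def[symmetric] um sg_def[symmetric] L1_def[symmetric] L2_def[symmetric]
          sumR
        ..
    qed
    show ?thesis unfolding R Tz Tmz by (rule alg[OF z0 P0])
  qed
  ultimately show ?thesis by simp
qed

end
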